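(* Let $\mathfrak g$ be a finite-dimensional Lie algebra over $\mathbb F$, $G$ a connected Lie group with Lie algebra $\mathfrak g$, $R$ an endomorphism of $\mathfrak g$ (not necessarily an $R$-matrix), $c\in\mathbb F$, and assume that $\mathcal R(x,y)=(R(x-y)+cy,\,R(x-y)+cx)$ is an $R$-matrix of $\mathfrak g\times\mathfrak g$. For $\lambda\in\mathbb F$ let $\psi_\lambda:\mathfrak g^*\times\mathfrak g^*\to\mathfrak g^*$, $\psi_\lambda(\xi,\eta)=\lambda\xi-\eta$. Then: (1) for every $\mathrm{Ad}^*$-invariant function $F$ on $\mathfrak g^*$, $F\circ\psi_1$ is a Casimir function of $\{\cdot,\cdot\}_{\mathcal R}$; (2) for all $\mathrm{Ad}^*$-invariant functions $F,H$ on $\mathfrak g^*$ and all $\lambda,\gamma\in\mathbb F$, $\{F\circ\psi_\lambda,H\circ\psi_\gamma\}_{\mathcal R}=0$; in particular, if $F,H$ are $\mathrm{Ad}^*$-invariant polynomials of degrees $l$ and $k$ and the functions $F_0,\dots,F_l,H_0,\dots,H_k$ on $\mathfrak g^*\times\mathfrak g^*$ are defined by $F(\lambda\xi-\eta)=\sum_{i=0}^l\lambda^iF_i(\xi,\eta)$ and $H(\gamma\xi-\eta)=\sum_{j=0}^k\gamma^jH_j(\xi,\eta)$ for all $\lambda,\gamma$, then all the $F_i,H_j$ pairwise Poisson commute for $\{\cdot,\cdot\}_{\mathcal R}$; (3) if $c=1$, then $\psi_1:(\mathfrak g^*\times\mathfrak g^*,\{\cdot,\cdot\}_{\mathcal R})\to(\mathfrak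 g^*,\{\cdot,\cdot\})$ is a Poisson map, where $\{F,H\}(\xi)=\langle\xi,[d_\xi F,d_\xi H]\rangle$ is the Lie–Poisson bracket of $\mathfrak g^*$.
   Context: $\mathfrak g\times\mathfrak g$ carries the componentwise bracket. An endomorphism $S$ of a Lie algebra is an $R$-matrix if $[x,y]_S=\tfrac12([Sx,y]+[x,Sy])$ is a Lie bracket. $\mathfrak g^*\times\mathfrak g^*$ is identified with $(\mathfrak g\times\mathfrak g)^*$ via the pairing $\langle(\xi,\eta),(x,y)\rangle=\langle\xi,x\rangle-\langle\eta,y\rangle$; accordingly the differential $d_{(\xi,\eta)}F$ of a function on $\mathfrak g^*\times\mathfrak g^*$ is an element of $\mathfrak g\times\mathfrak g$ (via this pairing), and $d_\xi F\in\mathfrak g$ for functions on $\mathfrak g^*$. The Poisson $\mathcal R$-bracket on $\mathfrak g^*\times\mathfrak g^*$ is $\{F,H\}_{\mathcal R}(\xi,\eta)=\tfrac12\langle(\xi,\eta),[\mathcal R\,d_{(\xi,\eta)}F,d_{(\xi,\eta)}H]+[d_{(\xi,\eta)}F,\mathcal R\,d_{(\xi,\eta)}H]\rangle$. Functions are smooth ($\mathbb F=\mathbb R$) or holomorphic ($\mathbb F=\mathbb C$). *)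

theory Defs
  imports "HOL-Analysis.Analysis"
begin

text \<open>Model: the ground field is a type 'k of class real_normed_field (a commutative
absolutely valued real algebra, i.e. R or C up to isomorphism). The Lie algebra g is
'k^'n (a fixed basis), g* is identified with 'k^'n via the dual basis, so that the
pairing is the coordinate sum below.\<close>

definition pair :: "'k::real_normed_field ^ 'n \<Rightarrow> 'k ^ 'n \<Rightarrow> 'k" where
  "pair \<xi> x = (\<Sum>i\<in>UNIV. \<xi> $ i * x $ i)"

definition pair2 :: "('k::real_normed_field ^ 'n) \<times> ('k ^ 'n) \<Rightarrow> ('k ^ 'n) \<times> ('k ^ 'n) \<Rightarrow> 'k" where
  "pair2 p q = pair (fst p) (fst q) - pair (snd p) (snd q)"

definition is_lie_bracket :: "('k::field \<Rightarrow> 'v \<Rightarrow> 'v) \<Rightarrow> ('v::ab_group_add \<Rightarrow> 'v \<Rightarrow> 'v) \<Rightarrow> bool" where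
  "is_lie_bracket sc br \<longleftrightarrow>
     (\<forall>a u v w. br (sc a u + v) w = sc a (br u w) + br v w) \<and>
     (\<forall>a u v w. br w (sc a u + v) = sc a (br w u) + br w v) \<and>
     (\<forall>u. br u u = 0) \<and>
     (\<forall>u v w. br u (br v w) + br v (br w u) + br w (br u v) = 0)"

definition is_R_matrix :: "('k::field \<Rightarrow> 'v \<Rightarrow> 'v) \<Rightarrow> ('v::ab_group_add \<Rightarrow> 'v \<Rightarrow> 'v) \<Rightarrow> ('v \<Rightarrow> 'v) \<Rightarrow> bool" where
  "is_R_matrix sc br S \<longleftrightarrow>
     is_lie_bracket sc (\<lambda>x y. sc (inverse 2) (br (S x) y + br x (S y)))"

definition sc2 :: "'k::real_normed_field \<Rightarrow> ('k ^ 'n) \<times> ('k ^ 'n) \<Rightarrow> ('k ^ 'n) \<times> ('k ^ 'n)" where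
  "sc2 a p = (a *s fst p, a *s snd p)"

definition prod_br :: "('k ^ 'n \<Rightarrow> 'k ^ 'n \<Rightarrow> 'k ^ 'n) \<Rightarrow> ('k ^ 'n) \<times> ('k ^ 'n) \<Rightarrow> ('k ^ 'n) \<times> ('k ^ 'n) \<Rightarrow> ('k ^ 'n) \<times> ('k ^ 'n)" where
  "prod_br B p q = (B (fst p) (fst q), B (snd p) (snd q))"

definition Rcal :: "('k::real_normed_field ^ 'n \<Rightarrow> 'k ^ 'n) \<Rightarrow> 'k \<Rightarrow> ('k ^ 'n) \<times> ('k ^ 'n) \<Rightarrow> ('k ^ 'n) \<times> ('k ^ 'n)" where
  "Rcal R c p = (R (fst p - snd p) + c *s snd p, R (fst p - snd p) + c *s fst p)"

text \<open>'k-differentiability: Frechet differentiable with 'k-linear derivative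
(for 'k = C this is holomorphy).\<close>
definition kdifferentiable :: "('k::real_normed_field ^ 'm \<Rightarrow> 'k) \<Rightarrow> 'k ^ 'm \<Rightarrow> bool" where
  "kdifferentiable f x \<longleftrightarrow>
     (\<exists>D. (f has_derivative D) (at x) \<and> (\<forall>c v. D (c *s v) = c * D v))"

definition partial :: "('k::real_normed_field ^ 'm \<Rightarrow> 'k) \<Rightarrow> 'm \<Rightarrow> 'k ^ 'm \<Rightarrow> 'k" where
  "partial f i x = frechet_derivative f (at x) (axis i 1)"

fun Ck :: "nat \<Rightarrow> ('k::real_normed_field ^ 'm \<Rightarrow> 'k) \<Rightarrow> bool" where
  "Ck 0 f = continuous_on UNIV f"
| "Ck (Suc m) f = ((\<forall>x. kdifferentiable f x) \<and> (\<forall>i. Ck m (\<lambda>x. partial f i x)))"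

definition smooth :: "('k::real_normed_field ^ 'm \<Rightarrow> 'k) \<Rightarrow> bool" where
  "smooth f \<longleftrightarrow> (\<forall>m. Ck m f)"

definition smooth2 :: "(('k::real_normed_field ^ 'n) \<times> ('k ^ 'n) \<Rightarrow> 'k) \<Rightarrow> bool" where
  "smooth2 f \<longleftrightarrow> smooth (\<lambda>z::'k ^ ('n + 'n). f (\<chi> i. z $ Inl i, \<chi> i. z $ Inr i))"

definition d1 :: "('k::real_normed_field ^ 'n \<Rightarrow> 'k) \<Rightarrow> 'k ^ 'n \<Rightarrow> 'k ^ 'n" where
  "d1 f \<xi> = (\<chi> i. frechet_derivative f (at \<xi>) (axis i 1))"

text \<open>d_(xi,eta) F in g x g, with pair2 (v,w) (d F) = DF(xi,eta)(v,w).\<close>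
definition d2 :: "(('k::real_normed_field ^ 'n) \<times> ('k ^ 'n) \<Rightarrow> 'k) \<Rightarrow> ('k ^ 'n) \<times> ('k ^ 'n) \<Rightarrow> ('k ^ 'n) \<times> ('k ^ 'n)" where
  "d2 f p = ((\<chi> i. frechet_derivative f (at p) (axis i 1, 0)),
             (\<chi> i. - frechet_derivative f (at p) (0, axis i 1)))"

definition R_bracket :: "('k::real_normed_field ^ 'n \<Rightarrow> 'k ^ 'n \<Rightarrow> 'k ^ 'n) \<Rightarrow>
    (('k ^ 'n) \<times> ('k ^ 'n) \<Rightarrow> ('k ^ 'n) \<times> ('k ^ 'n)) \<Rightarrow>
    (('k ^ 'n) \<times> ('k ^ 'n) \<Rightarrow> 'k) \<Rightarrow> (('k ^ 'n) \<times> ('k ^ 'n) \<Rightarrow> 'k) \<Rightarrow> ('k ^ 'n) \<times> ('k ^ 'n) \<Rightarrow> 'k" where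
  "R_bracket B S F H p =
     inverse 2 * pair2 p (prod_br B (S (d2 F p)) (d2 H p) + prod_br B (d2 F p) (S (d2 H p)))"

definition LP_bracket :: "('k::real_normed_field ^ 'n \<Rightarrow> 'k ^ 'n \<Rightarrow> 'k ^ 'n) \<Rightarrow>
    ('k ^ 'n \<Rightarrow> 'k) \<Rightarrow> ('k ^ 'n \<Rightarrow> 'k) \<Rightarrow> 'k ^ 'n \<Rightarrow> 'k" where
  "LP_bracket B F H \<xi> = pair \<xi> (B (d1 F \<xi>) (d1 H \<xi>))"

definition casimir :: "((('k::real_normed_field ^ 'n) \<times> ('k ^ 'n) \<Rightarrow> 'k) \<Rightarrow> (('k ^ 'n) \<times> ('k ^ 'n) \<Rightarrow> 'k) \<Rightarrow> ('k ^ 'n) \<times> ('k ^ 'n) \<Rightarrow> 'k)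
     \<Rightarrow> (('k ^ 'n) \<times> ('k ^ 'n) \<Rightarrow> 'k) \<Rightarrow> bool" where
  "casimir P C \<longleftrightarrow> (\<forall>H. smooth2 H \<longrightarrow> (\<forall>p. P C H p = 0))"

definition psi :: "'k::real_normed_field \<Rightarrow> ('k ^ 'n) \<times> ('k ^ 'n) \<Rightarrow> 'k ^ 'n" where
  "psi lam p = lam *s fst p - snd p"

text \<open>Ad(exp x) = e^(ad x); for connected G, Ad(G) is generated by these, so
Ad*-invariance means invariance under xi |-> xi o e^(ad x) for all x in g.\<close>
definition expad :: "('k::{real_normed_field,banach} ^ 'n \<Rightarrow> 'k ^ 'n \<Rightarrow> 'k ^ 'n) \<Rightarrow> 'k ^ 'n \<Rightarrow> 'k ^ 'n \<Rightarrow> 'k ^ 'n" where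
  "expad B x v = (\<Sum>m. inverse (fact m) *\<^sub>R ((B x ^^ m) v))"

definition coAd :: "('k::{real_normed_field,banach} ^ 'n \<Rightarrow> 'k ^ 'n \<Rightarrow> 'k ^ 'n) \<Rightarrow> 'k ^ 'n \<Rightarrow> 'k ^ 'n \<Rightarrow> 'k ^ 'n" where
  "coAd B x \<xi> = (\<chi> i. pair \<xi> (expad B x (axis i 1)))"

definition Ad_star_invariant :: "('k::{real_normed_field,banach} ^ 'n \<Rightarrow> 'k ^ 'n \<Rightarrow> 'k ^ 'n) \<Rightarrow> ('k ^ 'n \<Rightarrow> 'k) \<Rightarrow> bool" where
  "Ad_star_invariant B F \<longleftrightarrow> (\<forall>x \<xi>. F (coAd B x \<xi>) = F \<xi>)"

inductive poly_le :: "nat \<Rightarrow> ('k::real_normed_field ^ 'n \<Rightarrow> 'k) \<Rightarrow> bool" where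
  pconst: "poly_le d (\<lambda>_. a)"
| pcoord: "1 \<le> d \<Longrightarrow> poly_le d (\<lambda>\<xi>. \<xi> $ i)"
| padd: "poly_le d f \<Longrightarrow> poly_le d g \<Longrightarrow> poly_le d (\<lambda>\<xi>. f \<xi> + g \<xi>)"
| pmult: "poly_le d f \<Longrightarrow> poly_le e g \<Longrightarrow> poly_le (d + e) (\<lambda>\<xi>. f \<xi> * g \<xi>)"
| pmono: "poly_le d f \<Longrightarrow> d \<le> e \<Longrightarrow> poly_le e f"

definition poly_degree :: "('k::real_normed_field ^ 'n \<Rightarrow> 'k) \<Rightarrow> nat \<Rightarrow> bool" where
  "poly_degree f l \<longleftrightarrow> poly_le l f \<and> (\<forall>d<l. \<not> poly_le d f)"

end

theory Submission
  imports Defs "HOL-Computational_Algebra.Polynomial"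
begin


lemma pair_addL: "pair (u+v) w = pair u w + pair v w"
  unfolding pair_def by (simp add: sum.distrib distrib_right)
lemma pair_addR: "pair w (u+v) = pair w u + pair w v"
  unfolding pair_def by (simp add: sum.distrib distrib_left)
lemma pair_diffL: "pair (u-v) w = pair u w - pair v w"
  unfolding pair_def by (simp add: sum_subtractf left_diff_distrib)
lemma pair_diffR: "pair w (u-v) = pair w u - pair w v"
  unfolding pair_def by (simp add: sum_subtractf right_diff_distrib)
lemma pair_minusL: "pair (-u) w = - pair u w"
  unfolding pair_def by (simp add: sum_negf)
lemma pair_minusR: "pair w (-u) = - pair w u"
  unfolding pair_def by (simp add: sum_negf)
lemma pair_scaleL: "pair (a *s u) w = a * pair u w"
  unfolding pair_def by (simp add: sum_distrib_left mult.assoc)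
lemma pair_scaleR: "pair w (a *s u) = a * pair w u"
  unfolding pair_def by (simp add: sum_distrib_left mult.left_commute)
lemma pair_0L[simp]: "pair 0 w = 0"
  unfolding pair_def by simp
lemma pair_0R[simp]: "pair w 0 = 0"
  unfolding pair_def by simp

lemmas pair_simps = pair_addL pair_addR pair_diffL pair_diffR pair_minusL pair_minusR pair_scaleL pair_scaleR

context
  fixes B :: "'k::{real_normed_field,banach} ^ 'n \<Rightarrow> 'k ^ 'n \<Rightarrow> 'k ^ 'n"
  assumes lie: "is_lie_bracket (*s) B"
begin

lemma B_lin: "B (a *s u + v) w = a *s B u w + B v w" "B w (a *s u + v) = a *s B w u + B w v"
  "B u u = 0"
  using lie unfolding is_lie_bracket_def by blast+

lemma B_0L[simp]: "B 0 w = 0"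
  using B_lin(1)[of 1 0 0 w] by simp
lemma B_0R[simp]: "B w 0 = 0"
  using B_lin(2)[of w 1 0 0] by simp
lemma B_addL: "B (u+v) w = B u w + B v w"
  using B_lin(1)[of 1 u v w] by simp
lemma B_addR: "B w (u+v) = B w u + B w v"
  using B_lin(2)[of w 1 u v] by simp
lemma B_scaleL: "B (a *s u) w = a *s B u w"
  using B_lin(1)[of a u 0 w] by simp
lemma B_scaleR: "B w (a *s u) = a *s B w u"
  using B_lin(2)[of w a u 0] by simp
lemma B_minusL: "B (-u) w = - B u w"
  using B_scaleL[of "-1" u w] by simp
lemma B_minusR: "B w (-u) = - B w u"
  using B_scaleR[of w "-1" u] by simp
lemma B_diffL: "B (u-v) w = B u w - B v w"
  using B_addL[of u "-v" w] B_minusL by simp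
lemma B_diffR: "B w (u-v) = B w u - B w v"
  using B_addR[of w u "-v"] B_minusR by simp
lemma B_anti: "B u v = - B v u"
proof -
  have "B (u+v) (u+v) = 0" by (rule B_lin(3))
  moreover have "B (u+v) (u+v) = B u v + B v u" unfolding B_addL B_addR by (simp add: B_lin(3))
  ultimately have "B u v + B v u = 0" by simp
  then show ?thesis by (simp add: eq_neg_iff_add_eq_0)
qed

lemmas B_simps = B_addL B_addR B_diffL B_diffR B_minusL B_minusR B_scaleL B_scaleR

end

definition klin :: "('k::field ^ 'n \<Rightarrow> 'k ^ 'm) \<Rightarrow> bool" where
  "klin f \<longleftrightarrow> (\<forall>u v. f (u+v) = f u + f v) \<and> (\<forall>a u. f (a *s u) = a *s f u)"

lemma klin_0: "klin f \<Longrightarrow> f 0 = 0"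
  unfolding klin_def by (metis add_cancel_right_right add_0)

lemma klin_sum: "klin f \<Longrightarrow> f (\<Sum>i\<in>S. g i) = (\<Sum>i\<in>S. f (g i))"
proof (induction S rule: infinite_finite_induct)
  case (infinite A) then show ?case by (simp add: klin_0)
next
  case empty then show ?case by (simp add: klin_0)
next
  case (insert x F) then show ?case by (simp add: klin_def)
qed

lemma klin_expand: "klin f \<Longrightarrow> f v = (\<Sum>i\<in>UNIV. (v$i) *s f (axis i 1))"
proof -
  assume k: "klin f"
  have "f v = f (\<Sum>i\<in>UNIV. (v$i) *s axis i 1)" by (simp add: basis_expansion)
  also have "\<dots> = (\<Sum>i\<in>UNIV. (v$i) *s f (axis i 1))" using k by (simp add: klin_sum klin_def)
  finally show ?thesis .
qed

lemma norm_smult_vec: "norm (c *s (w::'k::real_normed_field ^ 'n)) = norm c * norm w"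
  unfolding norm_vec_def by (simp add: norm_mult L2_set_right_distrib)

lemma norm_le_sum_vec: "norm (x::'k::real_normed_field ^ 'n) \<le> (\<Sum>i\<in>UNIV. norm (x$i))"
  unfolding norm_vec_def by (rule L2_set_le_sum) simp

lemma norm_nth_le_k: "norm ((x::'k::real_normed_field ^ 'n) $ i) \<le> norm x"
  unfolding norm_vec_def by (rule member_le_L2_set) simp_all

lemma klin_bound:
  fixes f :: "'k::real_normed_field ^ 'n \<Rightarrow> 'k ^ 'm"
  assumes "klin f"
  shows "\<exists>K\<ge>0. \<forall>v. norm (f v) \<le> K * norm v"
proof (intro exI[of _ "\<Sum>i\<in>UNIV. norm (f (axis i 1))"] conjI allI)
  show "0 \<le> (\<Sum>i\<in>UNIV. norm (f (axis i 1)))" by (simp add: sum_nonneg)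
  fix v
  have "norm (f v) = norm (\<Sum>i\<in>UNIV. (v$i) *s f (axis i 1))" using klin_expand[OF assms] by metis
  also have "\<dots> \<le> (\<Sum>i\<in>UNIV. norm ((v$i) *s f (axis i 1)))" by (rule norm_sum)
  also have "\<dots> = (\<Sum>i\<in>UNIV. norm (v$i) * norm (f (axis i 1)))" by (simp add: norm_smult_vec)
  also have "\<dots> \<le> (\<Sum>i\<in>UNIV. norm v * norm (f (axis i 1)))"
    by (intro sum_mono mult_right_mono) (simp_all add: norm_nth_le_k)
  also have "\<dots> = (\<Sum>i\<in>UNIV. norm (f (axis i 1))) * norm v" by (simp add: sum_distrib_left mult.commute)
  finally show "norm (f v) \<le> (\<Sum>i\<in>UNIV. norm (f (axis i 1))) * norm v" .
qed

lemma bounded_linear_smult_axis: "bounded_linear (\<lambda>c::'k::real_normed_field. c *s axis i (1::'k))"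
proof (rule bounded_linear_intro[where K="norm (axis i (1::'k))"])
  show "(x + y) *s axis i 1 = x *s axis i 1 + y *s axis i 1" for x y :: 'k
    by (simp add: vec_eq_iff distrib_right)
  show "(r *\<^sub>R x) *s axis i 1 = r *\<^sub>R (x *s axis i (1::'k))" for r and x :: 'k
    unfolding vec_eq_iff by simp
  show "norm (x *s axis i 1) \<le> norm x * norm (axis i (1::'k))" for x :: 'k
    by (simp add: norm_smult_vec)
qed

lemma vec_has_derivative:
  fixes f :: "'a::real_normed_vector \<Rightarrow> 'k::real_normed_field ^ 'n"
  assumes "\<And>i. ((\<lambda>z. f z $ i) has_derivative (\<lambda>h. f' h $ i)) F"
  shows "(f has_derivative f') F"
proof -
  have "((\<lambda>z. \<Sum>i\<in>UNIV. (f z $ i) *s axis i 1) has_derivative (\<lambda>h. \<Sum>i\<in>UNIV. (f' h $ i) *s axis i 1)) F"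
    by (intro has_derivative_sum bounded_linear.has_derivative[OF bounded_linear_smult_axis] assms)
  then show ?thesis by (simp add: basis_expansion)
qed

lemma bounded_linear_pair: "bounded_linear (pair \<xi>)"
  unfolding pair_def
  by (intro bounded_linear_sum bounded_linear_compose[OF bounded_linear_mult_right bounded_linear_vec_nth])

lemma pair_axis: "pair \<xi> (axis i 1) = \<xi> $ i"
  unfolding pair_def axis_def by (simp add: if_distrib cong: if_cong)

lemma pair_sumR: "pair \<xi> (\<Sum>i\<in>S. g i) = (\<Sum>i\<in>S. pair \<xi> (g i))"
  unfolding pair_def by (simp add: sum_distrib_left sum.swap[of _ S])

lemma pair_comm: "pair u v = pair v u"
  unfolding pair_def by (simp add: mult.commute)


lemma pow_bound:
  fixes f :: "'a::real_normed_vector \<Rightarrow> 'a"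
  assumes "\<forall>v. norm (f v) \<le> K * norm v" "K \<ge> 0"
  shows "norm ((f ^^ m) v) \<le> K^m * norm v"
proof (induction m)
  case 0 then show ?case by simp
next
  case (Suc m)
  have "norm ((f ^^ Suc m) v) = norm (f ((f ^^ m) v))" by simp
  also have "\<dots> \<le> K * norm ((f ^^ m) v)" using assms(1) by blast
  also have "\<dots> \<le> K * (K^m * norm v)" using Suc assms(2) by (simp add: mult_left_mono)
  finally show ?case by (simp add: mult.assoc)
qed

lemma scaleR_smult: "r *\<^sub>R (v::'k::real_normed_field ^ 'n) = of_real r *s v"
  unfolding vec_eq_iff by (simp add: scaleR_conv_of_real[where 'a='k])

context
  fixes B :: "'k::{real_normed_field,banach} ^ 'n \<Rightarrow> 'k ^ 'n \<Rightarrow> 'k ^ 'n"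
  assumes lie: "is_lie_bracket (*s) B"
begin

lemma klin_B: "klin (B x)"
  unfolding klin_def using lie by (simp add: B_addR B_scaleR)

lemma expad_summable: "summable (\<lambda>m. inverse (fact m) *\<^sub>R ((B y ^^ m) v))"
proof -
  obtain K where K: "K \<ge> 0" "\<forall>v. norm (B y v) \<le> K * norm v"
    using klin_bound[OF klin_B] by blast
  have s: "summable (\<lambda>m. inverse (fact m) * K^m * norm v)"
    using summable_mult2[OF summable_exp[of K]] by simp
  show ?thesis
  proof (rule summable_comparison_test'[OF s])
    fix m :: nat
    have "norm (inverse (fact m) *\<^sub>R ((B y ^^ m) v)) = inverse (fact m) * norm ((B y ^^ m) v)"
      by simp
    also have "\<dots> \<le> inverse (fact m) * (K^m * norm v)"
      using pow_bound[OF K(2) K(1)] by (intro mult_left_mono) auto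
    finally show "norm (inverse (fact m) *\<^sub>R ((B y ^^ m) v)) \<le> inverse (fact m) * K^m * norm v"
      by (simp add: mult.assoc)
  qed
qed

lemma pow_scale: "(B (z *s x) ^^ m) v = z^m *s ((B x ^^ m) v)"
proof (induction m)
  case 0 then show ?case by simp
next
  case (Suc m)
  then show ?case using lie by (simp add: B_scaleL B_scaleR vector_smult_assoc mult.commute)
qed

definition cc :: "'k ^ 'n \<Rightarrow> 'k ^ 'n \<Rightarrow> 'n \<Rightarrow> nat \<Rightarrow> 'k" where
  "cc x \<xi> i m = of_real (inverse (fact m)) * pair \<xi> ((B x ^^ m) (axis i 1))"

lemma coAd_series: "coAd B (z *s x) \<xi> $ i = (\<Sum>m. cc x \<xi> i m * z^m)"
proof -
  have "coAd B (z *s x) \<xi> $ i = pair \<xi> (expad B (z *s x) (axis i 1))"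
    by (simp add: coAd_def)
  also have "\<dots> = (\<Sum>m. pair \<xi> (inverse (fact m) *\<^sub>R ((B (z *s x) ^^ m) (axis i 1))))"
    unfolding expad_def by (rule bounded_linear.suminf[OF bounded_linear_pair expad_summable])
  also have "\<dots> = (\<Sum>m. cc x \<xi> i m * z^m)"
    by (simp add: pow_scale scaleR_smult pair_scaleR cc_def mult_ac)
  finally show ?thesis .
qed

lemma cc_summable: "summable (cc x \<xi> i)"
proof -
  have "summable (\<lambda>m. pair \<xi> (inverse (fact m) *\<^sub>R ((B x ^^ m) (axis i 1))))"
    by (rule bounded_linear.summable[OF bounded_linear_pair expad_summable])
  moreover have "(\<lambda>m. pair \<xi> (inverse (fact m) *\<^sub>R ((B x ^^ m) (axis i 1)))) = cc x \<xi> i"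
    by (simp add: fun_eq_iff scaleR_smult pair_scaleR cc_def)
  ultimately show ?thesis by simp
qed

lemma cc_0: "cc x \<xi> i 0 = \<xi> $ i"
  by (simp add: cc_def pair_axis)

lemma cc_1: "cc x \<xi> i 1 = pair \<xi> (B x (axis i 1))"
  unfolding cc_def by simp

lemma cc_deriv: "DERIV (\<lambda>z. \<Sum>m. cc x \<xi> i m * z^m) 0 :> cc x \<xi> i 1"
proof -
  have "DERIV (\<lambda>z. \<Sum>m. cc x \<xi> i m * z^m) 0 :> (\<Sum>m. diffs (cc x \<xi> i) m * 0^m)"
    by (rule termdiffs_strong[where K=1]) (use cc_summable in simp_all)
  then show ?thesis by (simp add: diffs_def)
qed

lemma inv_infinitesimal:
  assumes kd: "kdifferentiable F \<xi>" and inv: "Ad_star_invariant B F"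
  shows "pair \<xi> (B x (d1 F \<xi>)) = 0"
proof -
  obtain D where D: "(F has_derivative D) (at \<xi>)" and Dh: "\<forall>c v. D (c *s v) = c * D v"
    using kd unfolding kdifferentiable_def by blast
  define g where "g z = coAd B (z *s x) \<xi>" for z :: 'k
  define w where "w = (\<chi> i. pair \<xi> (B x (axis i 1)))"
  have gi: "(\<lambda>z. g z $ i) = (\<lambda>z. \<Sum>m. cc x \<xi> i m * z^m)" for i
    by (simp add: g_def coAd_series)
  have g0: "g 0 = \<xi>"
    by (simp add: vec_eq_iff fun_cong[OF gi] cc_0)
  have gd: "(g has_derivative (\<lambda>h. h *s w)) (at 0)"
  proof (rule vec_has_derivative)
    fix i
    have "((\<lambda>z. \<Sum>m. cc x \<xi> i m * z^m) has_derivative (*) (cc x \<xi> i 1)) (at 0)"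
      using cc_deriv by (simp add: has_field_derivative_def)
    moreover have "(*) (cc x \<xi> i 1) = (\<lambda>h. (h *s w) $ i)"
      unfolding fun_eq_iff w_def cc_1 by (simp add: mult.commute)
    ultimately show "((\<lambda>z. g z $ i) has_derivative (\<lambda>h. (h *s w) $ i)) (at 0)"
      by (simp add: gi)
  qed
  have c1: "((F \<circ> g) has_derivative (D \<circ> (\<lambda>h. h *s w))) (at 0)"
    by (rule diff_chain_at[OF gd]) (simp add: g0 D)
  have "F \<circ> g = (\<lambda>z. F \<xi>)"
    using inv by (simp add: fun_eq_iff g_def Ad_star_invariant_def)
  then have c2: "((F \<circ> g) has_derivative (\<lambda>h. 0)) (at 0)"
    by simp
  have "D \<circ> (\<lambda>h. h *s w) = (\<lambda>h. 0)"
    by (rule has_derivative_unique[OF c1 c2])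
  then have Dw: "D w = 0"
    by (metis comp_apply vector_smult_lid)
  have lD: "linear D" using has_derivative_bounded_linear[OF D] bounded_linear.linear by blast
  have dF: "d1 F \<xi> = (\<chi> i. D (axis i 1))"
    using frechet_derivative_at[OF D] by (simp add: d1_def)
  have "D w = D (\<Sum>i\<in>UNIV. (w$i) *s axis i 1)" by (simp add: basis_expansion)
  also have "\<dots> = (\<Sum>i\<in>UNIV. w$i * D (axis i 1))"
    using Dh by (simp add: linear_sum[OF lD])
  also have "\<dots> = (\<Sum>i\<in>UNIV. pair \<xi> ((d1 F \<xi> $ i) *s B x (axis i 1)))"
    by (simp add: dF w_def pair_scaleR mult.commute)
  also have "\<dots> = pair \<xi> (B x (d1 F \<xi>))"
    by (simp add: pair_sumR klin_expand[OF klin_B, of x "d1 F \<xi>"])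
  finally show ?thesis using Dw by simp
qed

end


lemma bounded_linear_smult_vec: "bounded_linear (\<lambda>v::'k::real_normed_field ^ 'n. lam *s v)"
proof (rule bounded_linear_intro[where K="norm lam"])
  show "lam *s (x + y) = lam *s x + lam *s y" for x y :: "'k ^ 'n"
    by (simp add: vec_eq_iff distrib_left)
  show "lam *s (r *\<^sub>R x) = r *\<^sub>R (lam *s x)" for r and x :: "'k ^ 'n"
    unfolding vec_eq_iff by simp
  show "norm (lam *s x) \<le> norm x * norm lam" for x :: "'k ^ 'n"
    by (simp add: norm_smult_vec mult.commute)
qed

lemma bounded_linear_psi: "bounded_linear (psi lam :: ('k::real_normed_field ^ 'n) \<times> ('k ^ 'n) \<Rightarrow> 'k ^ 'n)"
proof -
  have "bounded_linear (\<lambda>p::('k ^ 'n) \<times> ('k ^ 'n). lam *s fst p - snd p)"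
    by (intro bounded_linear_sub bounded_linear_compose[OF bounded_linear_smult_vec bounded_linear_fst]
        bounded_linear_snd)
  then show ?thesis by (simp add: psi_def[abs_def])
qed

lemma d1_eq: "(F has_derivative D) (at x) \<Longrightarrow> d1 F x = (\<chi> i. D (axis i 1))"
proof -
  assume h: "(F has_derivative D) (at x)"
  have "frechet_derivative F (at x) = D" using frechet_derivative_at[OF h] by simp
  then show ?thesis by (simp add: d1_def)
qed

lemma d2_psi:
  fixes F :: "'k::real_normed_field ^ 'n \<Rightarrow> 'k"
  assumes kd: "kdifferentiable F (psi lam p)"
  shows "d2 (F \<circ> psi lam) p = (lam *s d1 F (psi lam p), d1 F (psi lam p))"
proof -
  obtain D where D: "(F has_derivative D) (at (psi lam p))" and Dh: "\<forall>c v. D (c *s v) = c * D v"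
    using kd unfolding kdifferentiable_def by blast
  have lD: "linear D" using has_derivative_bounded_linear[OF D] bounded_linear.linear by blast
  have "((F \<circ> psi lam) has_derivative (D \<circ> psi lam)) (at p)"
    by (rule diff_chain_at[OF bounded_linear_imp_has_derivative[OF bounded_linear_psi] D])
  then have fd: "frechet_derivative (F \<circ> psi lam) (at p) = D \<circ> psi lam"
    using frechet_derivative_at by metis
  have m: "D (- v) = - D v" for v using linear_neg[OF lD] .
  show ?thesis
    unfolding d1_eq[OF D] d2_def fd by (simp add: psi_def vec_eq_iff Dh m)
qed

definition C1 :: "('k::real_normed_field ^ 'n \<Rightarrow> 'k) \<Rightarrow> bool" where
  "C1 f \<longleftrightarrow> (\<forall>x. kdifferentiable f x) \<and> (\<forall>i. continuous_on UNIV (\<lambda>x. partial f i x))"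

lemma smooth_C1: "smooth f \<Longrightarrow> C1 f"
  unfolding smooth_def C1_def
  by (metis Ck.simps(1) Ck.simps(2))

lemma d1_partial: "d1 f x $ i = partial f i x"
  by (simp add: d1_def partial_def)

context
  fixes B :: "'k::{real_normed_field,banach} ^ 'n \<Rightarrow> 'k ^ 'n \<Rightarrow> 'k ^ 'n"
  assumes lie: "is_lie_bracket (*s) B"
begin

lemma inv2:
  assumes "kdifferentiable F \<xi>" "Ad_star_invariant B F"
  shows "pair \<xi> (B (d1 F \<xi>) x) = 0"
  using inv_infinitesimal[OF lie assms, of x] B_anti[OF lie, of "d1 F \<xi>" x]
  by (simp add: pair_minusR)

lemma comm0:
  assumes F: "\<forall>x. kdifferentiable F x" "Ad_star_invariant B F"
    and H: "C1 H" "Ad_star_invariant B H"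
  shows "pair \<zeta> (B (d1 F \<mu>) (d1 H \<mu>)) = 0"
proof -
  define a where "a = d1 F \<mu>"
  define \<phi> where "\<phi> v = pair \<zeta> (B a v)" for v
  have \<phi>e: "\<phi> v = (\<Sum>i\<in>UNIV. v$i * \<phi> (axis i 1))" for v
    unfolding \<phi>_def
    by (subst klin_expand[OF klin_B[OF lie]]) (simp add: pair_sumR pair_scaleR)
  define h where "h t = \<phi> (d1 H (\<mu> + t *s \<zeta>))" for t :: 'k
  have hz: "h t = 0" if "t \<noteq> 0" for t
  proof -
    define \<nu> where "\<nu> = \<mu> + t *s \<zeta>"
    define b where "b = d1 H \<nu>"
    have "pair \<mu> (B a b) = 0" unfolding a_def by (rule inv2) (use F in auto)
    moreover have "pair \<nu> (B a b) = 0" unfolding b_def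
      by (rule inv_infinitesimal[OF lie]) (use H in \<open>auto simp: C1_def\<close>)
    ultimately have "pair (\<mu> - \<nu>) (B a b) = 0" by (simp add: pair_diffL)
    moreover have "\<mu> - \<nu> = (- t) *s \<zeta>" by (simp add: \<nu>_def vec_eq_iff)
    ultimately have "t * pair \<zeta> (B a b) = 0" by (simp add: pair_scaleL pair_minusL)
    then show ?thesis using that by (simp add: h_def \<phi>_def b_def \<nu>_def)
  qed
  have hc: "continuous_on UNIV h"
  proof -
    have l: "(\<lambda>t. \<mu> + t *s \<zeta>) = (\<lambda>t. \<chi> j. \<mu>$j + t * \<zeta>$j)" by (simp add: fun_eq_iff vec_eq_iff)
    have cl: "continuous_on UNIV (\<lambda>t::'k. \<mu> + t *s \<zeta>)"
      unfolding l by (intro continuous_on_vec_lambda continuous_intros)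
    have "h = (\<lambda>t. \<Sum>i\<in>UNIV. partial H i (\<mu> + t *s \<zeta>) * \<phi> (axis i 1))"
      by (simp add: fun_eq_iff h_def \<phi>e[of "d1 H _"] d1_partial)
    moreover have "continuous_on UNIV (\<lambda>t. \<Sum>i\<in>UNIV. partial H i (\<mu> + t *s \<zeta>) * \<phi> (axis i 1))"
      using H(1) unfolding C1_def
      by (intro continuous_intros continuous_on_compose2[OF _ cl]) auto
    ultimately show ?thesis by simp
  qed
  then have "(h \<longlongrightarrow> h 0) (at 0)"
    by (simp add: continuous_on_eq_continuous_at isCont_def)
  moreover have "(h \<longlongrightarrow> 0) (at 0)"
    by (rule tendsto_eventually) (auto simp: eventually_at_filter hz)
  ultimately have "h 0 = 0" by (rule tendsto_unique[OF at_neq_bot])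
  then show ?thesis by (simp add: h_def \<phi>_def a_def)
qed

end


context
  fixes B :: "'k::{real_normed_field,banach} ^ 'n \<Rightarrow> 'k ^ 'n \<Rightarrow> 'k ^ 'n"
    and R :: "'k ^ 'n \<Rightarrow> 'k ^ 'n"
    and c :: 'k
  assumes lie: "is_lie_bracket (*s) B"
    and R_lin: "\<forall>a u v. R (a *s u + v) = a *s R u + R v"
begin

lemma R_0[simp]: "R 0 = 0"
  using R_lin by (metis add_cancel_right_right add_0 vector_smult_lid)

lemma R_klin: "klin R"
  unfolding klin_def using R_lin by (metis R_0 add.right_neutral vector_smult_lid)

lemma bracket_psi_zero:
  assumes F: "C1 F" "Ad_star_invariant B F" and H: "C1 H" "Ad_star_invariant B H"
  shows "R_bracket B (Rcal R c) (F \<circ> psi lam) (H \<circ> psi gam) p = 0"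
proof -
  obtain \<xi> \<eta> where p: "p = (\<xi>, \<eta>)" by (cases p)
  define \<mu> where "\<mu> = lam *s \<xi> - \<eta>"
  define \<nu> where "\<nu> = gam *s \<xi> - \<eta>"
  define a where "a = d1 F \<mu>"
  define b where "b = d1 H \<nu>"
  have kF: "kdifferentiable F x" for x using F(1) by (simp add: C1_def)
  have kH: "kdifferentiable H x" for x using H(1) by (simp add: C1_def)
  have dF: "d2 (F \<circ> psi lam) p = (lam *s a, a)"
    using d2_psi[OF kF] by (simp add: a_def \<mu>_def p psi_def)
  have dH: "d2 (H \<circ> psi gam) p = (gam *s b, b)"
    using d2_psi[OF kH] by (simp add: b_def \<nu>_def p psi_def)
  have I2: "pair \<nu> (B x b) = 0" for x
    unfolding b_def by (rule inv_infinitesimal[OF lie kH H(2)])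
  have I1: "pair \<mu> (B a x) = 0" for x
    unfolding a_def by (rule inv2[OF lie kF F(2)])
  have K\<xi>: "pair \<xi> (B a b) = 0"
  proof (cases "lam = gam")
    case True
    then show ?thesis unfolding a_def b_def \<nu>_def \<mu>_def
      using comm0[OF lie _ F(2) H] kF by blast
  next
    case False
    have "(lam - gam) *s \<xi> = \<mu> - \<nu>" by (simp add: \<mu>_def \<nu>_def vec_eq_iff algebra_simps)
    then have "(lam - gam) * pair \<xi> (B a b) = pair \<mu> (B a b) - pair \<nu> (B a b)"
      by (metis pair_diffL pair_scaleL)
    then show ?thesis using I1 I2 False by simp
  qed
  have K\<eta>: "pair \<eta> (B a b) = 0"
  proof -
    have "\<eta> = lam *s \<xi> - \<mu>" by (simp add: \<mu>_def)
    then show ?thesis using K\<xi> I1 by (simp add: pair_diffL pair_scaleL)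
  qed
  have main: "R_bracket B (Rcal R c) (F \<circ> psi lam) (H \<circ> psi gam) p =
     inverse 2 * (pair \<nu> (B (R (lam *s a - a)) b) + pair \<mu> (B a (R (gam *s b - b)))
        + c * (gam + lam) * (pair \<xi> (B a b) - pair \<eta> (B a b)))"
    unfolding R_bracket_def dF dH
    by (simp add: pair2_def prod_br_def Rcal_def p \<mu>_def \<nu>_def B_simps[OF lie] pair_simps algebra_simps)
  show ?thesis unfolding main using I1 I2 K\<xi> K\<eta> by simp
qed

lemma casimir_psi1:
  assumes kF: "\<And>x. kdifferentiable F x" and inv: "Ad_star_invariant B F"
  shows "R_bracket B (Rcal R c) (F \<circ> psi 1) H p = 0"
proof -
  obtain \<xi> \<eta> where p: "p = (\<xi>, \<eta>)" by (cases p)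
  obtain u v where uv: "d2 H p = (u, v)" by (cases "d2 H p")
  define \<mu> where "\<mu> = \<xi> - \<eta>"
  define a where "a = d1 F \<mu>"
  have dF: "d2 (F \<circ> psi 1) p = (a, a)"
    using d2_psi[OF kF, of 1 p] by (simp add: a_def \<mu>_def p psi_def)
  have I1: "pair \<mu> (B a x) = 0" for x
    unfolding a_def by (rule inv2[OF lie kF inv])
  have main: "R_bracket B (Rcal R c) (F \<circ> psi 1) H p =
     inverse 2 * (pair \<mu> (B a (R (u - v))) + c * pair \<mu> (B a u) + c * pair \<mu> (B a v))"
    unfolding R_bracket_def dF uv
    by (simp add: pair2_def prod_br_def Rcal_def p \<mu>_def B_simps[OF lie] pair_simps algebra_simps)
  show ?thesis unfolding main using I1 by simp
qed

lemma pair_times2: "pair w (v * 2) = 2 * pair w v"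
  by (simp add: pair_def sum_distrib_left mult_ac)

lemma poisson_psi1:
  assumes kF: "\<And>x. kdifferentiable F x" and kH: "\<And>x. kdifferentiable H x"
  shows "R_bracket B (Rcal R 1) (F \<circ> psi 1) (H \<circ> psi 1) p = LP_bracket B F H (psi 1 p)"
proof -
  obtain \<xi> \<eta> where p: "p = (\<xi>, \<eta>)" by (cases p)
  define \<mu> where "\<mu> = \<xi> - \<eta>"
  define a where "a = d1 F \<mu>"
  define b where "b = d1 H \<mu>"
  have dF: "d2 (F \<circ> psi 1) p = (a, a)"
    using d2_psi[OF kF, of 1 p] by (simp add: a_def \<mu>_def p psi_def)
  have dH: "d2 (H \<circ> psi 1) p = (b, b)"
    using d2_psi[OF kH, of 1 p] by (simp add: b_def \<mu>_def p psi_def)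
  have ps: "psi 1 p = \<mu>" by (simp add: psi_def p \<mu>_def)
  show ?thesis
    unfolding R_bracket_def dF dH ps LP_bracket_def a_def[symmetric] b_def[symmetric]
    by (simp add: pair2_def prod_br_def Rcal_def p \<mu>_def B_simps[OF lie] pair_simps algebra_simps pair_times2)
qed

end


lemma interp:
  fixes l :: nat
  shows "\<exists>W::nat \<Rightarrow> nat \<Rightarrow> 'k::field_char_0. \<forall>a::nat \<Rightarrow> 'k. \<forall>i\<le>l.
           a i = (\<Sum>m\<le>l. W i m * (\<Sum>j\<le>l. (of_nat m)^j * a j))"
proof -
  define t :: "nat \<Rightarrow> 'k" where "t m = of_nat m" for m
  define L where "L m = smult (inverse (\<Prod>k\<in>{..l}-{m}. (t m - t k))) (\<Prod>k\<in>{..l}-{m}. [:- t k, 1:])" for m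
  have Lt: "poly (L m) (t k) = (if k = m then 1 else 0)" if "m \<le> l" "k \<le> l" for m k
  proof (cases "k = m")
    case True
    have "(\<Prod>k\<in>{..l}-{m}. (t m - t k)) \<noteq> 0"
      by (simp add: t_def)
    then show ?thesis using True by (simp add: L_def poly_prod)
  next
    case False
    then have "k \<in> {..l}-{m}" using that by simp
    then have "(\<Prod>k'\<in>{..l}-{m}. poly [:- t k', 1:] (t k)) = 0"
      by (intro prod_zero) auto
    then show ?thesis using False by (simp add: L_def poly_prod)
  qed
  have degL: "degree (L m) \<le> l" if "m \<le> l" for m
  proof -
    have "degree (L m) \<le> degree (\<Prod>k\<in>{..l}-{m}. [:- t k, 1:])"
      unfolding L_def by (rule degree_smult_le)
    also have "\<dots> \<le> sum (degree \<circ> (\<lambda>k. [:- t k, 1:])) ({..l}-{m})"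
      by (rule degree_prod_sum_le) simp
    also have "\<dots> = card ({..l}-{m})" by simp
    also have "\<dots> \<le> l" using that by simp
    finally show ?thesis .
  qed
  show ?thesis
  proof (intro exI[of _ "\<lambda>i m. coeff (L m) i"] allI impI)
    fix a :: "nat \<Rightarrow> 'k" and i assume il: "i \<le> l"
    define q where "q = (\<Sum>j\<le>l. monom (a j) j)"
    define Q where "Q = (\<Sum>m\<le>l. smult (poly q (t m)) (L m))"
    have pq: "poly q x = (\<Sum>j\<le>l. x^j * a j)" for x
      by (simp add: q_def poly_sum poly_monom mult.commute)
    have dq: "degree q \<le> l" unfolding q_def
      by (rule degree_sum_le) (auto intro: order.trans[OF degree_monom_le])
    have dQ: "degree Q \<le> l" unfolding Q_def
      by (rule degree_sum_le) (auto intro: order.trans[OF degree_smult_le] degL)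
    have PQ: "poly Q (t k) = poly q (t k)" if "k \<le> l" for k
    proof -
      have "poly Q (t k) = (\<Sum>m\<le>l. poly q (t m) * poly (L m) (t k))"
        by (simp add: Q_def poly_sum)
      also have "\<dots> = (\<Sum>m\<le>l. if m = k then poly q (t k) else 0)"
        by (intro sum.cong) (auto simp: Lt that)
      also have "\<dots> = poly q (t k)" using that by simp
      finally show ?thesis .
    qed
    have "q - Q = 0"
    proof (rule ccontr)
      assume nz: "q - Q \<noteq> 0"
      have "t ` {..l} \<subseteq> {x. poly (q - Q) x = 0}" using PQ by auto
      then have "card (t ` {..l}) \<le> card {x. poly (q - Q) x = 0}"
        by (intro card_mono poly_roots_finite nz)
      also have "\<dots> \<le> degree (q - Q)" by (rule card_poly_roots_bound[OF nz])
      also have "\<dots> \<le> l" using dq dQ by (rule degree_diff_le)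
      finally have "card (t ` {..l}) \<le> l" .
      moreover have "card (t ` {..l}) = Suc l"
        by (subst card_image) (auto simp: t_def inj_on_def)
      ultimately show False by simp
    qed
    then have qQ: "q = Q" by simp
    have "a i = coeff q i" unfolding q_def using il by (simp add: coeff_sum_monom)
    also have "\<dots> = coeff Q i" by (simp add: qQ)
    also have "\<dots> = (\<Sum>m\<le>l. poly q (t m) * coeff (L m) i)" by (simp add: Q_def coeff_sum)
    also have "\<dots> = (\<Sum>m\<le>l. coeff (L m) i * (\<Sum>j\<le>l. (of_nat m)^j * a j))"
      by (simp add: pq t_def mult.commute)
    finally show "a i = (\<Sum>m\<le>l. coeff (L m) i * (\<Sum>j\<le>l. (of_nat m)^j * a j))" .
  qed
qed



lemma kdiff_fd:
  assumes "kdifferentiable f x"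
  shows "(f has_derivative frechet_derivative f (at x)) (at x)"
    "\<And>c v. frechet_derivative f (at x) (c *s v) = c * frechet_derivative f (at x) v"
proof -
  obtain D where D: "(f has_derivative D) (at x)" and Dh: "\<forall>c v. D (c *s v) = c * D v"
    using assms unfolding kdifferentiable_def by blast
  have e: "frechet_derivative f (at x) = D" using frechet_derivative_at[OF D] by simp
  show "(f has_derivative frechet_derivative f (at x)) (at x)" using D e by simp
  show "\<And>c v. frechet_derivative f (at x) (c *s v) = c * frechet_derivative f (at x) v"
    using Dh e by simp
qed

lemma C1_cont: "C1 f \<Longrightarrow> continuous_on UNIV f"
  unfolding C1_def kdifferentiable_def
  by (meson continuous_at_imp_continuous_on has_derivative_continuous)

lemma C1_const: "C1 (\<lambda>_. a)"
proof -
  have fd: "frechet_derivative (\<lambda>_. a) (at x) = (\<lambda>_. 0)" for x :: "'a::real_normed_field ^ 'b"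
    using frechet_derivative_at[OF has_derivative_const] by simp
  show ?thesis unfolding C1_def kdifferentiable_def partial_def fd
    by (auto intro!: exI[of _ "\<lambda>_. 0"] has_derivative_const)
qed

lemma C1_coord: "C1 (\<lambda>\<xi>. \<xi> $ i)"
proof -
  have D: "((\<lambda>\<xi>. \<xi> $ i) has_derivative (\<lambda>h. h $ i)) (at x)" for x :: "'a::real_normed_field ^ 'b"
    by (rule bounded_linear_imp_has_derivative[OF bounded_linear_vec_nth])
  have fd: "frechet_derivative (\<lambda>\<xi>. \<xi> $ i) (at x) = (\<lambda>h. h $ i)" for x :: "'a::real_normed_field ^ 'b"
    using frechet_derivative_at[OF D] by simp
  show ?thesis unfolding C1_def kdifferentiable_def partial_def fd
    using D by (auto intro!: exI[of _ "\<lambda>h. h $ i"])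
qed

lemma C1_add: assumes "C1 f" "C1 g" shows "C1 (\<lambda>x. f x + g x)"
proof -
  have kf: "kdifferentiable f x" "kdifferentiable g x" for x using assms by (auto simp: C1_def)
  have D: "((\<lambda>x. f x + g x) has_derivative (\<lambda>h. frechet_derivative f (at x) h + frechet_derivative g (at x) h)) (at x)" for x
    by (intro has_derivative_add kdiff_fd(1) kf)
  have fd: "frechet_derivative (\<lambda>x. f x + g x) (at x) = (\<lambda>h. frechet_derivative f (at x) h + frechet_derivative g (at x) h)" for x
    using frechet_derivative_at[OF D] by simp
  show ?thesis unfolding C1_def
  proof (intro conjI allI)
    fix x show "kdifferentiable (\<lambda>x. f x + g x) x"
      unfolding kdifferentiable_def using D[of x] kdiff_fd(2)[OF kf(1)] kdiff_fd(2)[OF kf(2)]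
      by (auto simp: distrib_left)
  next
    fix i
    have "(\<lambda>x. partial (\<lambda>x. f x + g x) i x) = (\<lambda>x. partial f i x + partial g i x)"
      by (simp add: partial_def fd)
    then show "continuous_on UNIV (\<lambda>x. partial (\<lambda>x. f x + g x) i x)"
      using assms by (auto simp: C1_def intro!: continuous_on_add)
  qed
qed

lemma C1_mult: assumes "C1 f" "C1 g" shows "C1 (\<lambda>x. f x * g x)"
proof -
  have kf: "kdifferentiable f x" "kdifferentiable g x" for x using assms by (auto simp: C1_def)
  have D: "((\<lambda>x. f x * g x) has_derivative (\<lambda>h. f x * frechet_derivative g (at x) h + frechet_derivative f (at x) h * g x)) (at x)" for x
    by (intro has_derivative_mult kdiff_fd(1) kf)
  have fd: "frechet_derivative (\<lambda>x. f x * g x) (at x) = (\<lambda>h. f x * frechet_derivative g (at x) h + frechet_derivative f (at x) h * g x)" for x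
    using frechet_derivative_at[OF D] by simp
  show ?thesis unfolding C1_def
  proof (intro conjI allI)
    fix x show "kdifferentiable (\<lambda>x. f x * g x) x"
      unfolding kdifferentiable_def using D[of x] kdiff_fd(2)[OF kf(1)] kdiff_fd(2)[OF kf(2)]
      by (auto simp: algebra_simps)
  next
    fix i
    have "(\<lambda>x. partial (\<lambda>x. f x * g x) i x) = (\<lambda>x. f x * partial g i x + partial f i x * g x)"
      by (simp add: partial_def fd)
    then show "continuous_on UNIV (\<lambda>x. partial (\<lambda>x. f x * g x) i x)"
      using assms C1_cont[OF assms(1)] C1_cont[OF assms(2)]
      by (auto simp: C1_def intro!: continuous_on_add continuous_on_mult)
  qed
qed

lemma poly_C1: "poly_le d f \<Longrightarrow> C1 f"
  by (induction rule: poly_le.induct) (auto intro: C1_const C1_coord C1_add C1_mult)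

lemma d2_comb:
  assumes fin: "finite S" and dG: "\<And>m. m \<in> S \<Longrightarrow> G m differentiable (at p)"
  shows "d2 (\<lambda>q. \<Sum>m\<in>S. w m * G m q) p = (\<Sum>m\<in>S. sc2 (w m) (d2 (G m) p))"
proof -
  have D: "((\<lambda>q. \<Sum>m\<in>S. w m * G m q) has_derivative
      (\<lambda>h. \<Sum>m\<in>S. w m * frechet_derivative (G m) (at p) h)) (at p)"
    using dG by (intro has_derivative_sum has_derivative_mult_right) (simp add: frechet_derivative_works)
  have fd: "frechet_derivative (\<lambda>q. \<Sum>m\<in>S. w m * G m q) (at p) = (\<lambda>h. \<Sum>m\<in>S. w m * frechet_derivative (G m) (at p) h)"
    using frechet_derivative_at[OF D] by simp
  show ?thesis
    unfolding d2_def fd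
    by (simp add: sc2_def prod_eq_iff vec_eq_iff fst_sum snd_sum sum_negf)
qed



definition Qb where
  "Qb B R c p u v = inverse 2 * pair2 p (prod_br B (Rcal R c u) v + prod_br B u (Rcal R c v))"

lemma R_bracket_Qb: "R_bracket B (Rcal R c) A C p = Qb B R c p (d2 A p) (d2 C p)"
  by (simp add: R_bracket_def Qb_def)

context
  fixes B :: "'k::{real_normed_field,banach} ^ 'n \<Rightarrow> 'k ^ 'n \<Rightarrow> 'k ^ 'n"
    and R :: "'k ^ 'n \<Rightarrow> 'k ^ 'n"
    and c :: 'k
  assumes lie: "is_lie_bracket (*s) B"
    and R_lin: "\<forall>a u v. R (a *s u + v) = a *s R u + R v"
begin

lemma R_add: "R (u + v) = R u + R v" and R_scale: "R (a *s u) = a *s R u"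
  using R_klin[OF lie R_lin] unfolding klin_def by auto

lemma R_diff: "R (u - v) = R u - R v"
proof -
  have "R (u - v) + R v = R u" using R_add[of "u - v" v] by simp
  then show ?thesis by (simp add: eq_diff_eq)
qed

lemma R_minus: "R (- v) = - R v"
  using R_diff[of 0 v] R_0[OF lie R_lin] by simp

lemma Qb_linL: "Qb B R c p (sc2 a u + u') v = a * Qb B R c p u v + Qb B R c p u' v"
  by (cases p; cases u; cases u'; cases v)
     (simp add: Qb_def pair2_def prod_br_def Rcal_def sc2_def B_simps[OF lie] pair_simps
        R_add R_scale R_diff R_minus algebra_simps)

lemma Qb_linR: "Qb B R c p v (sc2 a u + u') = a * Qb B R c p v u + Qb B R c p v u'"
  by (cases p; cases u; cases u'; cases v)
     (simp add: Qb_def pair2_def prod_br_def Rcal_def sc2_def B_simps[OF lie] pair_simps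
        R_add R_scale R_diff R_minus algebra_simps)

lemma Qb_0L: "Qb B R c p 0 v = 0"
  by (cases p; cases v) (simp add: Qb_def pair2_def prod_br_def Rcal_def zero_prod_def R_0[OF lie R_lin] B_0L[OF lie] B_0R[OF lie])

lemma Qb_0R: "Qb B R c p v 0 = 0"
  by (cases p; cases v) (simp add: Qb_def pair2_def prod_br_def Rcal_def zero_prod_def R_0[OF lie R_lin] B_0L[OF lie] B_0R[OF lie])

lemma Qb_sumL: "finite S \<Longrightarrow> Qb B R c p (\<Sum>m\<in>S. sc2 (w m) (u m)) v = (\<Sum>m\<in>S. w m * Qb B R c p (u m) v)"
  by (induction S rule: finite_induct) (simp_all add: Qb_0L Qb_linL)

lemma Qb_sumR: "finite S \<Longrightarrow> Qb B R c p v (\<Sum>m\<in>S. sc2 (w m) (u m)) = (\<Sum>m\<in>S. w m * Qb B R c p v (u m))"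
  by (induction S rule: finite_induct) (simp_all add: Qb_0R Qb_linR)

lemma psi_differentiable:
  assumes "kdifferentiable F (psi lam p)"
  shows "(F \<circ> psi lam) differentiable (at p)"
proof -
  obtain D where D: "(F has_derivative D) (at (psi lam p))"
    using assms unfolding kdifferentiable_def by blast
  show ?thesis unfolding differentiable_def
    using diff_chain_at[OF bounded_linear_imp_has_derivative[OF bounded_linear_psi] D] by blast
qed

lemma comb_zero:
  assumes S: "finite S" and T: "finite T"
    and F: "C1 F" "Ad_star_invariant B F" and H: "C1 H" "Ad_star_invariant B H"
  shows "R_bracket B (Rcal R c) (\<lambda>q. \<Sum>m\<in>S. w m * (F \<circ> psi (s m)) q)
           (\<lambda>q. \<Sum>n\<in>T. w' n * (H \<circ> psi (s' n)) q) p = 0"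
proof -
  have kF: "kdifferentiable F x" "kdifferentiable H x" for x using F H by (auto simp: C1_def)
  have dA: "d2 (\<lambda>q. \<Sum>m\<in>S. w m * (F \<circ> psi (s m)) q) p = (\<Sum>m\<in>S. sc2 (w m) (d2 (F \<circ> psi (s m)) p))"
    by (rule d2_comb[OF S]) (rule psi_differentiable[OF kF(1)])
  have dC: "d2 (\<lambda>q. \<Sum>n\<in>T. w' n * (H \<circ> psi (s' n)) q) p = (\<Sum>n\<in>T. sc2 (w' n) (d2 (H \<circ> psi (s' n)) p))"
    by (rule d2_comb[OF T]) (rule psi_differentiable[OF kF(2)])
  have z: "Qb B R c p (d2 (F \<circ> psi (s m)) p) (d2 (H \<circ> psi (s' n)) p) = 0" for m n
    using bracket_psi_zero[OF lie R_lin F H, where lam="s m" and gam="s' n" and p=p and c=c] unfolding R_bracket_Qb .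
  show ?thesis
    unfolding R_bracket_Qb dA dC by (simp add: Qb_sumL Qb_sumR S T z)
qed

end

lemma coeffs_comb:
  fixes F :: "'k::real_normed_field ^ 'n \<Rightarrow> 'k"
  assumes h: "\<forall>lam \<xi> \<eta>. F (lam *s \<xi> - \<eta>) = (\<Sum>i\<le>l. lam ^ i * Fs i (\<xi>, \<eta>))"
  shows "\<exists>W. \<forall>i\<le>l. Fs i = (\<lambda>q. \<Sum>m\<le>l. W i m * (F \<circ> psi (of_nat m)) q)"
proof -
  obtain W :: "nat \<Rightarrow> nat \<Rightarrow> 'k" where W: "\<forall>a::nat \<Rightarrow> 'k. \<forall>i\<le>l.
           a i = (\<Sum>m\<le>l. W i m * (\<Sum>j\<le>l. (of_nat m)^j * a j))"
    using interp by blast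
  have "Fs i q = (\<Sum>m\<le>l. W i m * (F \<circ> psi (of_nat m)) q)" if "i \<le> l" for i q
  proof -
    have "Fs i q = (\<Sum>m\<le>l. W i m * (\<Sum>j\<le>l. (of_nat m)^j * Fs j q))"
      using spec[OF W, of "\<lambda>j. Fs j q"] that by simp
    also have "\<dots> = (\<Sum>m\<le>l. W i m * (F \<circ> psi (of_nat m)) q)"
      using h[rule_format, of _ "fst q" "snd q"] by (simp add: psi_def)
    finally show ?thesis .
  qed
  then show ?thesis by blast
qed


theorem theorem2p3:
  fixes B :: "'k::{real_normed_field,banach} ^ 'n \<Rightarrow> 'k ^ 'n \<Rightarrow> 'k ^ 'n"
    and R :: "'k ^ 'n \<Rightarrow> 'k ^ 'n"
    and c :: 'k
  assumes lie: "is_lie_bracket (*s) B"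
    and R_lin: "\<forall>a u v. R (a *s u + v) = a *s R u + R v"
    and Rmat: "is_R_matrix sc2 (prod_br B) (Rcal R c)"
  shows
    "(\<forall>F. smooth F \<and> Ad_star_invariant B F \<longrightarrow>
          casimir (R_bracket B (Rcal R c)) (F \<circ> psi 1))
   \<and> (\<forall>F H lam gam. smooth F \<and> Ad_star_invariant B F \<and> smooth H \<and> Ad_star_invariant B H \<longrightarrow>
          (\<forall>p. R_bracket B (Rcal R c) (F \<circ> psi lam) (H \<circ> psi gam) p = 0))
   \<and> (\<forall>F H (l::nat) (k::nat) Fs Hs.
          poly_degree F l \<and> poly_degree H k \<and> Ad_star_invariant B F \<and> Ad_star_invariant B H \<and>
          (\<forall>lam \<xi> \<eta>. F (lam *s \<xi> - \<eta>) = (\<Sum>i\<le>l. lam ^ i * Fs i (\<xi>, \<eta>))) \<and>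
          (\<forall>gam \<xi> \<eta>. H (gam *s \<xi> - \<eta>) = (\<Sum>j\<le>k. gam ^ j * Hs j (\<xi>, \<eta>))) \<longrightarrow>
          (\<forall>A\<in>Fs ` {..l} \<union> Hs ` {..k}. \<forall>C\<in>Fs ` {..l} \<union> Hs ` {..k}.
              \<forall>p. R_bracket B (Rcal R c) A C p = 0))
   \<and> (c = 1 \<longrightarrow> (\<forall>F H. smooth F \<and> smooth H \<longrightarrow>
          (\<forall>p. R_bracket B (Rcal R c) (F \<circ> psi 1) (H \<circ> psi 1) p = LP_bracket B F H (psi 1 p))))"
proof -
  have kd: "\<And>x. kdifferentiable F x" if "C1 F" for F :: "'k ^ 'n \<Rightarrow> 'k"
    using that by (simp add: C1_def)
  show ?thesis
  proof (intro conjI)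
    show "\<forall>F. smooth F \<and> Ad_star_invariant B F \<longrightarrow> casimir (R_bracket B (Rcal R c)) (F \<circ> psi 1)"
    proof (intro allI impI)
      fix F :: "'k ^ 'n \<Rightarrow> 'k" assume a: "smooth F \<and> Ad_star_invariant B F"
      then have kF: "\<And>x. kdifferentiable F x" using kd smooth_C1 by blast
      show "casimir (R_bracket B (Rcal R c)) (F \<circ> psi 1)"
        unfolding casimir_def using casimir_psi1[OF lie R_lin kF] a by blast
    qed
  next
    show "\<forall>F H lam gam. smooth F \<and> Ad_star_invariant B F \<and> smooth H \<and> Ad_star_invariant B H \<longrightarrow>
          (\<forall>p. R_bracket B (Rcal R c) (F \<circ> psi lam) (H \<circ> psi gam) p = 0)"
      using bracket_psi_zero[OF lie R_lin] smooth_C1 by blast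
  next
    show "\<forall>F H (l::nat) (k::nat) Fs Hs.
          poly_degree F l \<and> poly_degree H k \<and> Ad_star_invariant B F \<and> Ad_star_invariant B H \<and>
          (\<forall>lam \<xi> \<eta>. F (lam *s \<xi> - \<eta>) = (\<Sum>i\<le>l. lam ^ i * Fs i (\<xi>, \<eta>))) \<and>
          (\<forall>gam \<xi> \<eta>. H (gam *s \<xi> - \<eta>) = (\<Sum>j\<le>k. gam ^ j * Hs j (\<xi>, \<eta>))) \<longrightarrow>
          (\<forall>A\<in>Fs ` {..l} \<union> Hs ` {..k}. \<forall>C\<in>Fs ` {..l} \<union> Hs ` {..k}.
              \<forall>p. R_bracket B (Rcal R c) A C p = 0)"
    proof (intro allI impI ballI)
      fix F H :: "'k ^ 'n \<Rightarrow> 'k" and l k :: nat and Fs Hs A C p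
      assume a: "poly_degree F l \<and> poly_degree H k \<and> Ad_star_invariant B F \<and> Ad_star_invariant B H \<and>
          (\<forall>lam \<xi> \<eta>. F (lam *s \<xi> - \<eta>) = (\<Sum>i\<le>l. lam ^ i * Fs i (\<xi>, \<eta>))) \<and>
          (\<forall>gam \<xi> \<eta>. H (gam *s \<xi> - \<eta>) = (\<Sum>j\<le>k. gam ^ j * Hs j (\<xi>, \<eta>)))"
        and A: "A \<in> Fs ` {..l} \<union> Hs ` {..k}" and C: "C \<in> Fs ` {..l} \<union> Hs ` {..k}"
      have CF: "C1 F" using a poly_C1 unfolding poly_degree_def by blast
      have CH: "C1 H" using a poly_C1 unfolding poly_degree_def by blast
      obtain W where W: "\<forall>i\<le>l. Fs i = (\<lambda>q. \<Sum>m\<le>l. W i m * (F \<circ> psi (of_nat m)) q)"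
        using coeffs_comb[where F=F and l=l and Fs=Fs] a by blast
      obtain W' where W': "\<forall>i\<le>k. Hs i = (\<lambda>q. \<Sum>m\<le>k. W' i m * (H \<circ> psi (of_nat m)) q)"
        using coeffs_comb[where F=H and l=k and Fs=Hs] a by blast
      have repr: "\<exists>\<Phi> N w. C1 \<Phi> \<and> Ad_star_invariant B \<Phi> \<and>
            X = (\<lambda>q. \<Sum>m\<in>{..N}. w m * (\<Phi> \<circ> psi (of_nat m)) q)"
        if "X \<in> Fs ` {..l} \<union> Hs ` {..k}" for X
        using that W W' CF CH a by blast
      obtain \<Phi>1 N1 w1 where r1: "C1 \<Phi>1" "Ad_star_invariant B \<Phi>1"
          "A = (\<lambda>q. \<Sum>m\<in>{..N1}. w1 m * (\<Phi>1 \<circ> psi (of_nat m)) q)"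
        using repr[OF A] by blast
      obtain \<Phi>2 N2 w2 where r2: "C1 \<Phi>2" "Ad_star_invariant B \<Phi>2"
          "C = (\<lambda>q. \<Sum>m\<in>{..N2}. w2 m * (\<Phi>2 \<circ> psi (of_nat m)) q)"
        using repr[OF C] by blast
      show "R_bracket B (Rcal R c) A C p = 0"
        unfolding r1(3) r2(3) by (rule comb_zero[OF lie R_lin _ _ r1(1,2) r2(1,2)]) simp_all
    qed
  next
    show "c = 1 \<longrightarrow> (\<forall>F H. smooth F \<and> smooth H \<longrightarrow>
          (\<forall>p. R_bracket B (Rcal R c) (F \<circ> psi 1) (H \<circ> psi 1) p = LP_bracket B F H (psi 1 p)))"
      using poisson_psi1[OF lie R_lin] smooth_C1 kd by blast
  qed
qed

end
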